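(* If the MDE $\check{\Sigma}$ of $\Sigma$ under ${\rm M}_+(G)$ exists, it is the unique positive definite solution to the following system, where $\check K=\check{\Sigma}^{-1}$ and $\widehat{K}=\widehat{\Sigma}^{-1}$: (i) $\check{\Sigma}_{ij} \geq 0$ for $ij\in E(G)$; (ii) $\widehat{\Sigma}_{ij}=S_{ij}$ for $ij\in E(G)$; (iii) $\widehat{\Sigma}_{ii}=S_{ii}$ for $i\in V(G)$; (iv) $\check K_{ij} = \widehat{K}_{ij}=0$ for $ij\notin E(G)$; (v) $\check K_{ij} \leq \widehat{K}_{ij}$ for $ij\in E(G)$; (vi) $\check K_{ii} =\widehat{K}_{ii}$ for $i\in V(G)$; (vii) $\check{\Sigma}_{ij}(\widehat{K}_{ij}- \check K_{ij})=0$ for $ij\in E(G)$.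
   Context: Let $G=(V,E)$ be an undirected graph on $V=\{1,\ldots,d\}$, and let $S$ be the sample covariance matrix of $n$ i.i.d. observations from $N(0,\Sigma^* )$. $M(G)$ is the Gaussian graphical model ($(\Sigma^{-1})_{ij}=0$ for $ij\notin E$), $A(G)$ the set of positive definite $\Sigma$ with $\Sigma_{ij}\geq 0$ for all $ij\in E$ (locally associated Gaussian distributions), and ${\rm M}_+(G)=A(G)\cap M(G)$. $\widehat K$ is the maximum likelihood estimate of $K=\Sigma^{-1}$ in $M(G)$. The mixed dual estimate (MDE) $\check\Sigma$ is the solution of minimizing $-\log\det\Sigma+\operatorname{tr}(\Sigma\widehat K)$ over positive definite $\Sigma$ subject to $\Sigma_{ij}\geq 0$ for all $ij\in E(G)$. *)

theory Defs
  imports "HOL-Analysis.Analysis"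
begin

text \<open>Vertex set V = UNIV of a finite index type 'n; edges given by a symmetric
irreflexive relation E. Matrices are real^'n^'n.\<close>

definition pos_def_mat :: "real^'n::finite^'n \<Rightarrow> bool" where
  "pos_def_mat A \<longleftrightarrow> transpose A = A \<and> (\<forall>x. x \<noteq> 0 \<longrightarrow> 0 < x \<bullet> (A *v x))"

text \<open>Sample covariance of observations X 0, ..., X (n-1) from a mean-zero Gaussian.\<close>
definition sample_cov :: "nat \<Rightarrow> (nat \<Rightarrow> real^'n::finite) \<Rightarrow> real^'n^'n" where
  "sample_cov n X = (1 / real n) *\<^sub>R (\<Sum>k<n. (\<chi> i j. X k $ i * X k $ j))"

definition ggm_mle :: "('n::finite \<Rightarrow> 'n \<Rightarrow> bool) \<Rightarrow> real^'n^'n \<Rightarrow> real^'n^'n \<Rightarrow> bool" where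
  "ggm_mle E S K \<longleftrightarrow> pos_def_mat K \<and> (\<forall>i j. i \<noteq> j \<and> \<not> E i j \<longrightarrow> K $ i $ j = 0) \<and>
     (\<forall>K'. pos_def_mat K' \<and> (\<forall>i j. i \<noteq> j \<and> \<not> E i j \<longrightarrow> K' $ i $ j = 0) \<longrightarrow>
        ln (det K') - trace (S ** K') \<le> ln (det K) - trace (S ** K))"

definition mde :: "('n::finite \<Rightarrow> 'n \<Rightarrow> bool) \<Rightarrow> real^'n^'n \<Rightarrow> real^'n^'n \<Rightarrow> bool" where
  "mde E Khat Sig \<longleftrightarrow> pos_def_mat Sig \<and> (\<forall>i j. E i j \<longrightarrow> 0 \<le> Sig $ i $ j) \<and>
     (\<forall>Sig'. pos_def_mat Sig' \<and> (\<forall>i j. E i j \<longrightarrow> 0 \<le> Sig' $ i $ j) \<longrightarrow>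
        - ln (det Sig) + trace (Sig ** Khat) \<le> - ln (det Sig') + trace (Sig' ** Khat))"

text \<open>The system (i)-(vii) in the unknowns Sh (= Sigma-hat) and Sc (= Sigma-check).\<close>
definition mde_system :: "('n::finite \<Rightarrow> 'n \<Rightarrow> bool) \<Rightarrow> real^'n^'n \<Rightarrow> real^'n^'n \<Rightarrow> real^'n^'n \<Rightarrow> bool" where
  "mde_system E S Sh Sc \<longleftrightarrow>
     (\<forall>i j. E i j \<longrightarrow> 0 \<le> Sc $ i $ j) \<and>
     (\<forall>i j. E i j \<longrightarrow> Sh $ i $ j = S $ i $ j) \<and>
     (\<forall>i. Sh $ i $ i = S $ i $ i) \<and>
     (\<forall>i j. i \<noteq> j \<and> \<not> E i j \<longrightarrow> matrix_inv Sc $ i $ j = 0 \<and> matrix_inv Sh $ i $ j = 0) \<and>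
     (\<forall>i j. E i j \<longrightarrow> matrix_inv Sc $ i $ j \<le> matrix_inv Sh $ i $ j) \<and>
     (\<forall>i. matrix_inv Sc $ i $ i = matrix_inv Sh $ i $ i) \<and>
     (\<forall>i j. E i j \<longrightarrow> Sc $ i $ j * (matrix_inv Sh $ i $ j - matrix_inv Sc $ i $ j) = 0)"

end

theory Submission
  imports Defs
begin


abbreviation pd where "pd \<equiv> pos_def_mat"

lemma pd_sym: "pd A \<Longrightarrow> transpose A = A" by (simp add: pos_def_mat_def)

lemma pd_entry_sym: "pd A \<Longrightarrow> A $ i $ j = A $ j $ i"
proof -
  assume "pd A"
  from pd_sym[OF this] have "transpose A $ j $ i = A $ j $ i" by simp
  thus ?thesis by (simp add: transpose_def)
qed

lemma inv_props:
  fixes A :: "real^'n::finite^'n"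
  assumes "invertible A"
  shows "A ** matrix_inv A = mat 1" "matrix_inv A ** A = mat 1"
proof -
  from assms obtain B where "A ** B = mat 1 \<and> B ** A = mat 1" unfolding invertible_def by blast
  hence "A ** matrix_inv A = mat 1 \<and> matrix_inv A ** A = mat 1"
    unfolding matrix_inv_def by (rule someI)
  thus "A ** matrix_inv A = mat 1" "matrix_inv A ** A = mat 1" by auto
qed

lemma inv_unique:
  fixes A B :: "real^'n::finite^'n"
  assumes "A ** B = mat 1"
  shows "matrix_inv A = B"
proof -
  have BA: "B ** A = mat 1" using assms matrix_left_right_inverse by blast
  hence inv: "invertible A" using assms invertible_def by blast
  have "matrix_inv A = matrix_inv A ** (A ** B)" by (simp add: assms)
  also have "\<dots> = B" by (simp add: matrix_mul_assoc inv_props[OF inv])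
  finally show ?thesis .
qed

lemma inv_inv:
  fixes A :: "real^'n::finite^'n"
  assumes "invertible A" shows "matrix_inv (matrix_inv A) = A"
  by (rule inv_unique) (simp add: inv_props[OF assms])

lemma inv_sym:
  fixes A :: "real^'n::finite^'n"
  assumes "invertible A" "transpose A = A"
  shows "transpose (matrix_inv A) = matrix_inv A"
proof -
  have "A ** transpose (matrix_inv A) = mat 1"
  proof -
    have "transpose (matrix_inv A ** A) = mat 1" by (simp add: inv_props(2)[OF assms(1)])
    thus ?thesis by (simp add: matrix_transpose_mul assms(2))
  qed
  thus ?thesis using inv_unique by metis
qed

lemma quad_transpose:
  fixes L Q :: "real^'n::finite^'n"
  shows "x \<bullet> ((transpose L ** Q ** L) *v x) = (L *v x) \<bullet> (Q *v (L *v x))"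
proof -
  have "(transpose L ** Q ** L) *v x = transpose L *v (Q *v (L *v x))"
    by (simp add: matrix_vector_mul_assoc matrix_mul_assoc)
  hence "x \<bullet> ((transpose L ** Q ** L) *v x) = (x v* transpose L) \<bullet> (Q *v (L *v x))"
    by (simp only: dot_lmul_matrix)
  thus ?thesis by (simp only: vector_transpose_matrix)
qed

lemma pd_congr:
  fixes L Q :: "real^'n::finite^'n"
  assumes "pd Q" "invertible L"
  shows "pd (transpose L ** Q ** L)"
  unfolding pos_def_mat_def
proof safe
  show "transpose (transpose L ** Q ** L) = transpose L ** Q ** L"
    using pd_sym[OF assms(1)] by (simp add: matrix_transpose_mul matrix_mul_assoc)
next
  fix x :: "real^'n" assume "x \<noteq> 0"
  have inj: "inj ((*v) L)" by (rule inj_matrix_vector_mult[OF assms(2)])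
  hence "L *v x \<noteq> 0" using injD[OF inj, of x 0] \<open>x \<noteq> 0\<close> by auto
  thus "0 < x \<bullet> ((transpose L ** Q ** L) *v x)"
    using assms(1) unfolding quad_transpose pos_def_mat_def by blast
qed

lemma pd_diag_pos: "pd (Q::real^'n::finite^'n) \<Longrightarrow> 0 < Q $ a $ a"
proof -
  assume "pd Q"
  hence "0 < axis a 1 \<bullet> (Q *v axis a 1)" unfolding pos_def_mat_def
    by (metis axis_eq_0_iff zero_neq_one)
  moreover have "axis a 1 \<bullet> (Q *v axis a 1) = (Q *v axis a 1) $ a" by (simp add: inner_axis')
  moreover have "(Q *v axis a 1) $ a = Q $ a $ a"
    by (simp add: matrix_vector_mult_def axis_def if_distrib cong: if_cong)
  ultimately show ?thesis by simp
qed



lemma elim_step: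
  fixes Q :: "real^'n::finite^'n"
  assumes pdQ: "pd Q" and aD: "a \<notin> D" and diag: "\<forall>i\<in>D. \<forall>j. j \<noteq> i \<longrightarrow> Q$i$j = 0"
  shows "\<exists>E. det E = 1 \<and> pd (transpose E ** Q ** E) \<and>
     (\<forall>i\<in>insert a D. \<forall>j. j \<noteq> i \<longrightarrow> (transpose E ** Q ** E)$i$j = 0) \<and>
     trace (transpose E ** Q ** E) \<le> trace Q \<and>
     (trace (transpose E ** Q ** E) = trace Q \<longrightarrow> transpose E ** Q ** E = Q)"
proof -
  define c :: "real^'n" where "c = (\<chi> j. if j = a then 0 else Q$a$j / Q$a$a)"
  define E :: "real^'n^'n" where "E = (\<chi> i j. (if i = j then 1 else 0) - (if i = a then c$j else 0))"
  have qaa: "Q$a$a > 0" by (rule pd_diag_pos[OF pdQ])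
  have sym: "\<And>i j. Q$i$j = Q$j$i" using pd_entry_sym[OF pdQ] .
  have ca: "c$a = 0" by (simp add: c_def)
  have cQ: "c$j * Q$a$j = Q$a$a * (c$j)^2" for j
    using qaa by (cases "j = a") (auto simp: c_def power2_eq_square)
  have TQ: "(transpose E ** Q)$i$k = Q$i$k - c$i * Q$a$k" for i k
  proof -
    have "(transpose E ** Q)$i$k = (\<Sum>l\<in>UNIV. ((if l = i then 1 else 0) - (if l = a then c$i else 0)) * Q$l$k)"
      by (simp add: matrix_matrix_mult_def transpose_def E_def)
    also have "\<dots> = (\<Sum>l\<in>UNIV. (if l = i then Q$l$k else 0) - (if l = a then c$i * Q$l$k else 0))"
      by (rule sum.cong) (auto simp: left_diff_distrib)
    also have "\<dots> = Q$i$k - c$i * Q$a$k"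
      by (simp add: sum_subtractf)
    finally show ?thesis .
  qed
  define Q' where "Q' = transpose E ** Q ** E"
  have QE: "Q'$i$j = Q$i$j - c$i * Q$a$j - Q$i$a * c$j + Q$a$a * c$i * c$j" for i j
  proof -
    have "Q'$i$j = (\<Sum>k\<in>UNIV. (transpose E ** Q)$i$k * E$k$j)"
      unfolding Q'_def matrix_matrix_mult_def[of "transpose E ** Q" E] by simp
    also have "\<dots> = (\<Sum>k\<in>UNIV. (Q$i$k - c$i * Q$a$k) * ((if k = j then 1 else 0) - (if k = a then c$j else 0)))"
      unfolding TQ by (simp add: E_def)
    also have "\<dots> = (\<Sum>k\<in>UNIV. (if k = j then Q$i$k - c$i * Q$a$k else 0) - (if k = a then (Q$i$k - c$i * Q$a$k) * c$j else 0))"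
      by (rule sum.cong) (auto simp: right_diff_distrib)
    also have "\<dots> = Q$i$j - c$i * Q$a$j - (Q$i$a - c$i * Q$a$a) * c$j"
      by (simp add: sum_subtractf)
    finally show ?thesis by (simp add: algebra_simps)
  qed
  have detE: "det E = 1"
  proof -
    have cspan: "-c = (\<Sum>j\<in>UNIV - {a}. (-c$j) *s row j (mat 1::real^'n^'n))"
      by (auto simp: vec_eq_iff sum_component row_def mat_def ca if_distrib cong: if_cong)
    have "(\<Sum>j\<in>UNIV - {a}. (-c$j) *s row j (mat 1::real^'n^'n)) \<in> vec.span {row j (mat 1::real^'n^'n) |j. j \<noteq> a}"
      by (intro vec.span_sum vec.span_scale vec.span_base) auto
    hence sp: "-c \<in> vec.span {row j (mat 1::real^'n^'n) |j. j \<noteq> a}" using cspan by simp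
    have "E = (\<chi> k. if k = a then row a (mat 1) + (-c) else row k (mat 1))"
      by (auto simp: vec_eq_iff E_def row_def mat_def)
    thus ?thesis using det_row_span[OF sp] by simp
  qed
  have invE: "invertible E" using detE invertible_det_nz by force
  have pdQ': "pd Q'" unfolding Q'_def by (rule pd_congr[OF pdQ invE])
  have diag': "\<forall>i\<in>insert a D. \<forall>j. j \<noteq> i \<longrightarrow> Q'$i$j = 0"
  proof (intro ballI allI impI)
    fix i j assume i: "i \<in> insert a D" and ji: "j \<noteq> i"
    show "Q'$i$j = 0"
    proof (cases "i = a")
      case True
      thus ?thesis using ji qaa by (simp add: QE ca c_def)
    next
      case False
      hence iD: "i \<in> D" using i by auto
      have qia: "Q$i$a = 0" using diag iD False by auto
      hence "c$i = 0" using sym[of a i] by (simp add: c_def)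
      thus ?thesis using qia diag iD ji by (simp add: QE)
    qed
  qed
  have Qjj: "Q'$j$j = Q$j$j - Q$a$a * (c$j)^2" for j
  proof -
    have "Q'$j$j = Q$j$j - 2 * (c$j * Q$a$j) + Q$a$a * (c$j * c$j)"
      using sym[of j a] by (simp add: QE algebra_simps)
    thus ?thesis using cQ[of j] by (simp add: power2_eq_square)
  qed
  have trQ': "trace Q' = trace Q - Q$a$a * (\<Sum>j\<in>UNIV. (c$j)^2)"
    by (simp add: trace_def Qjj sum_subtractf sum_distrib_left)
  have sumnn: "(\<Sum>j\<in>UNIV. (c$j)^2) \<ge> 0" by (simp add: sum_nonneg)
  have le: "trace Q' \<le> trace Q" using trQ' qaa sumnn by (simp add: mult_nonneg_nonneg)
  have eq: "trace Q' = trace Q \<longrightarrow> Q' = Q"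
  proof
    assume "trace Q' = trace Q"
    hence "(\<Sum>j\<in>UNIV. (c$j)^2) = 0" using trQ' qaa by simp
    hence "\<forall>j\<in>UNIV. (c$j)^2 = 0" by (subst (asm) sum_nonneg_eq_0_iff) auto
    hence "\<forall>j. c$j = 0" by simp
    thus "Q' = Q" by (simp add: vec_eq_iff QE)
  qed
  show ?thesis using detE pdQ' diag' le eq unfolding Q'_def by blast
qed

definition goodm :: "real^'n::finite^'n \<Rightarrow> 'n set \<Rightarrow> real^'n^'n \<Rightarrow> bool" where
  "goodm Q0 D L \<longleftrightarrow> det L = 1 \<and> pd (transpose L ** Q0 ** L) \<and>
     (\<forall>i\<in>D. \<forall>j. j \<noteq> i \<longrightarrow> (transpose L ** Q0 ** L)$i$j = 0) \<and>
     trace (transpose L ** Q0 ** L) \<le> trace Q0 \<and>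
     (trace (transpose L ** Q0 ** L) = trace Q0 \<longrightarrow> transpose L ** Q0 ** L = Q0)"

lemma goodm_compose:
  assumes g1: "goodm Q0 D L" and g2: "goodm (transpose L ** Q0 ** L) D' E"
  shows "goodm Q0 D' (L ** E)"
proof -
  define Q1 where "Q1 = transpose L ** Q0 ** L"
  have eqm: "transpose (L ** E) ** Q0 ** (L ** E) = transpose E ** Q1 ** E"
    by (simp add: Q1_def matrix_transpose_mul matrix_mul_assoc)
  define Q2 where "Q2 = transpose E ** Q1 ** E"
  have a: "det L = 1" "trace Q1 \<le> trace Q0" "trace Q1 = trace Q0 \<longrightarrow> Q1 = Q0"
    using g1 unfolding goodm_def Q1_def by auto
  have b: "det E = 1" "pd Q2" "\<forall>i\<in>D'. \<forall>j. j \<noteq> i \<longrightarrow> Q2$i$j = 0"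
     "trace Q2 \<le> trace Q1" "trace Q2 = trace Q1 \<longrightarrow> Q2 = Q1"
    using g2 unfolding goodm_def Q1_def[symmetric] Q2_def[symmetric] by auto
  have c: "det (L ** E) = 1" by (simp add: det_mul a(1) b(1))
  have d: "trace Q2 \<le> trace Q0" using a(2) b(4) by linarith
  have e: "trace Q2 = trace Q0 \<longrightarrow> Q2 = Q0"
  proof
    assume "trace Q2 = trace Q0"
    hence "trace Q2 = trace Q1" "trace Q1 = trace Q0" using a(2) b(4) by linarith+
    thus "Q2 = Q0" using a(3) b(5) by simp
  qed
  show ?thesis unfolding goodm_def eqm Q2_def[symmetric] using b(2,3) c d e by blast
qed

lemma elim:
  fixes Q0 :: "real^'n::finite^'n"
  assumes pd0: "pd Q0"
  shows "finite D \<Longrightarrow> \<exists>L. goodm Q0 D L"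
proof (induction D rule: finite_induct)
  case empty
  have "goodm Q0 {} (mat 1)" by (simp add: goodm_def pd0)
  thus ?case by blast
next
  case (insert a D)
  then obtain L where L: "goodm Q0 D L" by blast
  have "\<exists>E. goodm (transpose L ** Q0 ** L) (insert a D) E"
    using elim_step[of "transpose L ** Q0 ** L" a D] L insert(2) unfolding goodm_def by auto
  then obtain E where "goodm (transpose L ** Q0 ** L) (insert a D) E" by blast
  thus ?case using goodm_compose[OF L] by blast
qed



lemma elim_full:
  fixes A :: "real^'n::finite^'n"
  assumes "pd A"
  obtains L where "det L = 1" "pd (transpose L ** A ** L)"
     "\<And>i j. j \<noteq> i \<Longrightarrow> (transpose L ** A ** L)$i$j = 0"
     "trace (transpose L ** A ** L) \<le> trace A"
     "trace (transpose L ** A ** L) = trace A \<Longrightarrow> transpose L ** A ** L = A"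
proof -
  obtain L where "goodm A UNIV L" using elim[OF assms, of UNIV] by auto
  thus ?thesis using that unfolding goodm_def by auto
qed

lemma det_congr1:
  fixes A L :: "real^'n::finite^'n"
  assumes "det L = 1" shows "det (transpose L ** A ** L) = det A"
  using assms by (simp add: det_mul)

lemma pd_det_pos:
  fixes A :: "real^'n::finite^'n"
  assumes "pd A" shows "det A > 0"
proof -
  obtain L where L: "det L = 1" "pd (transpose L ** A ** L)"
     "\<And>i j. j \<noteq> i \<Longrightarrow> (transpose L ** A ** L)$i$j = 0"
    using elim_full[OF assms] by metis
  define Q where "Q = transpose L ** A ** L"
  have "det Q = prod (\<lambda>i. Q$i$i) UNIV" unfolding Q_def by (rule det_diagonal) (use L(3) in auto)
  also have "\<dots> > 0" unfolding Q_def by (rule prod_pos) (use pd_diag_pos L(2) in auto)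
  finally show ?thesis using det_congr1[OF L(1)] unfolding Q_def by simp
qed

lemma pd_invertible: "pd (A::real^'n::finite^'n) \<Longrightarrow> invertible A"
  using pd_det_pos invertible_det_nz by force

lemma key_I:
  fixes C :: "real^'n::finite^'n"
  assumes pdC: "pd C"
  shows "ln (det C) \<le> trace C - real CARD('n)"
        "ln (det C) = trace C - real CARD('n) \<Longrightarrow> C = mat 1"
proof -
  obtain L where L: "det L = 1" "pd (transpose L ** C ** L)"
     "\<And>i j. j \<noteq> i \<Longrightarrow> (transpose L ** C ** L)$i$j = 0"
     "trace (transpose L ** C ** L) \<le> trace C"
     "trace (transpose L ** C ** L) = trace C \<Longrightarrow> transpose L ** C ** L = C"
    using elim_full[OF pdC] by metis
  define Q where "Q = transpose L ** C ** L"
  have pos: "\<And>i. Q$i$i > 0" using pd_diag_pos L(2) unfolding Q_def by auto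
  have "det C = det Q" unfolding Q_def using det_congr1[OF L(1)] by simp
  also have "det Q = prod (\<lambda>i. Q$i$i) UNIV" unfolding Q_def by (rule det_diagonal) (use L(3) in auto)
  finally have dC: "det C = prod (\<lambda>i. Q$i$i) UNIV" .
  have lnC: "ln (det C) = (\<Sum>i\<in>UNIV. ln (Q$i$i))" unfolding dC by (rule ln_prod) (use pos in \<open>auto simp: less_le\<close>)
  have trQ: "trace Q = (\<Sum>i\<in>UNIV. Q$i$i)" by (simp add: trace_def)
  have s1: "(\<Sum>i\<in>UNIV. ln (Q$i$i)) \<le> (\<Sum>i\<in>UNIV. Q$i$i - 1)"
    by (rule sum_mono) (use pos ln_le_minus_one in auto)
  have s2: "(\<Sum>i\<in>UNIV. Q$i$i - 1) = trace Q - real CARD('n)"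
    by (simp add: trQ sum_subtractf)
  have trle: "trace Q \<le> trace C" using L(4) unfolding Q_def .
  show "ln (det C) \<le> trace C - real CARD('n)" using lnC s1 s2 trle by linarith
  assume eq: "ln (det C) = trace C - real CARD('n)"
  hence "trace Q = trace C" using lnC s1 s2 trle by linarith
  hence QC: "Q = C" using L(5) unfolding Q_def by simp
  have "(\<Sum>i\<in>UNIV. (Q$i$i - 1) - ln (Q$i$i)) = 0"
    using lnC s2 eq QC by (simp add: sum_subtractf)
  hence "\<forall>i\<in>UNIV. (Q$i$i - 1) - ln (Q$i$i) = 0"
    by (subst (asm) sum_nonneg_eq_0_iff) (use pos ln_le_minus_one in auto)
  hence "\<And>i. Q$i$i = 1" using pos ln_eq_minus_one by force
  hence "Q = mat 1" using L(3) unfolding Q_def by (auto simp: vec_eq_iff mat_def)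
  thus "C = mat 1" using QC by simp
qed



lemma factor:
  fixes A :: "real^'n::finite^'n"
  assumes pdA: "pd A"
  shows "\<exists>R::real^'n^'n. transpose R ** A ** R = mat 1"
proof -
  obtain L where L: "det L = 1" "pd (transpose L ** A ** L)"
     "\<And>i j. j \<noteq> i \<Longrightarrow> (transpose L ** A ** L)$i$j = 0"
    using elim_full[OF pdA] by metis
  define Q where "Q = transpose L ** A ** L"
  have pos: "\<And>i. Q$i$i > 0" using pd_diag_pos L(2) unfolding Q_def by auto
  have off: "\<And>i j. j \<noteq> i \<Longrightarrow> Q$i$j = 0" using L(3) unfolding Q_def by auto
  define Dg :: "real^'n^'n" where "Dg = (\<chi> i j. if i = j then 1 / sqrt (Q$i$i) else 0)"
  have eq: "transpose (L ** Dg) ** A ** (L ** Dg) = transpose Dg ** Q ** Dg"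
    by (simp add: Q_def matrix_transpose_mul matrix_mul_assoc)
  have t1: "(transpose Dg ** Q)$i$k = Q$i$k / sqrt (Q$i$i)" for i k
  proof -
    have "(transpose Dg ** Q)$i$k = (\<Sum>ka\<in>UNIV. (if ka = i then 1 / sqrt (Q$ka$ka) else 0) * Q$ka$k)"
      by (simp add: matrix_matrix_mult_def transpose_def Dg_def)
    also have "\<dots> = (\<Sum>ka\<in>UNIV. if ka = i then Q$ka$k / sqrt (Q$ka$ka) else 0)"
      by (rule sum.cong) auto
    also have "\<dots> = Q$i$k / sqrt (Q$i$i)" by simp
    finally show ?thesis .
  qed
  have t2: "(transpose Dg ** Q ** Dg)$i$j = (if i = j then 1 else 0)" for i j
  proof -
    have "(transpose Dg ** Q ** Dg)$i$j = (\<Sum>k\<in>UNIV. (transpose Dg ** Q)$i$k * Dg$k$j)"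
      unfolding matrix_matrix_mult_def[of "transpose Dg ** Q" Dg] by simp
    also have "\<dots> = (\<Sum>k\<in>UNIV. if k = j then Q$i$j / sqrt (Q$i$i) / sqrt (Q$j$j) else 0)"
      unfolding t1 by (rule sum.cong) (auto simp: Dg_def)
    also have "\<dots> = (if i = j then 1 else 0)"
      using pos[of i] off[of j i] by (auto simp: divide_divide_eq_left simp flip: power2_eq_square)
    finally show ?thesis .
  qed
  have "transpose (L ** Dg) ** A ** (L ** Dg) = mat 1"
    unfolding eq by (simp add: vec_eq_iff t2 mat_def)
  thus ?thesis by blast
qed

lemma congr_cancel:
  fixes A B R :: "real^'n::finite^'n"
  assumes "invertible R" "transpose R ** B ** R = transpose R ** A ** R"
  shows "B = A"
proof -
  define R' where "R' = matrix_inv R"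
  have r1: "R ** R' = mat 1" using inv_props[OF assms(1)] R'_def by simp
  have r2: "transpose R' ** transpose R = mat 1"
    by (simp add: r1 flip: matrix_transpose_mul)
  have "\<And>X. transpose R' ** (transpose R ** X ** R) ** R' = X"
    by (simp add: matrix_mul_assoc r2) (simp add: r1 flip: matrix_mul_assoc)
  from this[of B] this[of A] assms(2) show ?thesis by metis
qed

lemma key_T:
  fixes A B :: "real^'n::finite^'n"
  assumes pdA: "pd A" and pdB: "pd B"
  shows "ln (det B) - ln (det A) \<le> trace (matrix_inv A ** B) - real CARD('n)"
        "ln (det B) - ln (det A) = trace (matrix_inv A ** B) - real CARD('n) \<Longrightarrow> B = A"
proof -
  obtain R :: "real^'n^'n" where R: "transpose R ** A ** R = mat 1" using factor[OF pdA] by blast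
  have dA: "det A > 0" using pd_det_pos[OF pdA] .
  have dB: "det B > 0" using pd_det_pos[OF pdB] .
  have dR: "det R * det R * det A = 1"
    using arg_cong[OF R, of det] by (simp add: det_mul mult_ac)
  hence "det R \<noteq> 0" by auto
  hence invR: "invertible R" using invertible_det_nz by blast
  define C where "C = transpose R ** B ** R"
  have pdC: "pd C" unfolding C_def by (rule pd_congr[OF pdB invR])
  have dC: "det C = det R * det R * det B" unfolding C_def by (simp add: det_mul)
  have lnC: "ln (det C) = ln (det B) - ln (det A)"
  proof -
    have "det R * det R = 1 / det A" using dR dA by (simp add: field_simps)
    hence "det C = det B / det A" using dC by simp
    thus ?thesis using dA dB by (simp add: ln_div)
  qed
  have "(transpose R ** A) ** R = mat 1" using R by (simp add: matrix_mul_assoc)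
  hence "R ** (transpose R ** A) = mat 1" using matrix_left_right_inverse by blast
  hence "(R ** transpose R) ** A = mat 1" by (simp add: matrix_mul_assoc)
  hence "A ** (R ** transpose R) = mat 1" using matrix_left_right_inverse by blast
  hence iA: "matrix_inv A = R ** transpose R" by (rule inv_unique)
  have trC: "trace (matrix_inv A ** B) = trace C"
  proof -
    have "trace (matrix_inv A ** B) = trace (R ** (transpose R ** B))"
      by (simp add: iA matrix_mul_assoc)
    also have "\<dots> = trace ((transpose R ** B) ** R)" by (rule trace_mul_sym)
    finally show ?thesis by (simp add: C_def)
  qed
  show "ln (det B) - ln (det A) \<le> trace (matrix_inv A ** B) - real CARD('n)"
    using key_I(1)[OF pdC] lnC trC by simp
  assume "ln (det B) - ln (det A) = trace (matrix_inv A ** B) - real CARD('n)"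
  hence "C = mat 1" using key_I(2)[OF pdC] lnC trC by simp
  hence "transpose R ** B ** R = transpose R ** A ** R" using R C_def by simp
  thus "B = A" by (rule congr_cancel[OF invR])
qed



lemma transpose_add': "transpose (A + B) = transpose A + transpose (B::real^'n::finite^'n)"
  by (simp add: transpose_def vec_eq_iff)

lemma matrix_add_rdistrib': "((A::real^'n::finite^'n) + B) ** C = A ** C + B ** C"
  by (simp add: matrix_matrix_mult_def vec_eq_iff distrib_right sum.distrib)

lemma matrix_diff_ldistrib': "(A::real^'n::finite^'n) ** (B - C) = A ** B - A ** C"
  by (simp add: matrix_matrix_mult_def vec_eq_iff right_diff_distrib sum_subtractf)

lemma trace_scaleR': "trace (c *\<^sub>R (A::real^'n::finite^'n)) = c * trace A"
  by (simp add: trace_def sum_distrib_left)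

lemma trace_mult_sum: "trace ((A::real^'n::finite^'n) ** B) = (\<Sum>k\<in>UNIV. \<Sum>i\<in>UNIV. A$k$i * B$i$k)"
  by (simp add: trace_def matrix_matrix_mult_def)

lemma quad_scale: "(c *\<^sub>R u) \<bullet> ((A::real^'n::finite^'n) *v (c *\<^sub>R u)) = c^2 * (u \<bullet> (A *v u))"
  by (simp add: matrix_scaleR_vector_ac scaleR_matrix_vector_assoc[symmetric] power2_eq_square)

lemma pd_lower:
  fixes A :: "real^'n::finite^'n"
  assumes pdA: "pd A"
  shows "\<exists>m>0. \<forall>x. m * (norm x)^2 \<le> x \<bullet> (A *v x)"
proof -
  have cont: "continuous_on (sphere 0 1) (\<lambda>x::real^'n. x \<bullet> (A *v x))"
    by (intro continuous_intros linear_continuous_on) (simp add: linear_conv_bounded_linear[symmetric])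
  obtain i :: 'n where True by blast
  have ne: "sphere (0::real^'n) 1 \<noteq> {}"
    using norm_axis_1[of i] by (metis mem_sphere_0 empty_iff)
  obtain x0 where x0: "x0 \<in> sphere 0 1" "\<forall>y\<in>sphere 0 1. x0 \<bullet> (A *v x0) \<le> y \<bullet> (A *v y)"
    using continuous_attains_inf[OF compact_sphere ne cont] by blast
  have "x0 \<noteq> 0" using x0(1) by auto
  hence m: "x0 \<bullet> (A *v x0) > 0" using pdA unfolding pos_def_mat_def by blast
  have "m' * (norm x)^2 \<le> x \<bullet> (A *v x)" if "m' = x0 \<bullet> (A *v x0)" for x m'
  proof (cases "x = 0")
    case True thus ?thesis by simp
  next
    case False
    define u where "u = (1 / norm x) *\<^sub>R x"
    have u: "u \<in> sphere 0 1" using False by (simp add: u_def)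
    have xu: "x = norm x *\<^sub>R u" using False by (simp add: u_def)
    have "x \<bullet> (A *v x) = (norm x)^2 * (u \<bullet> (A *v u))" by (subst (1 2) xu) (rule quad_scale)
    moreover have "m' \<le> u \<bullet> (A *v u)" using x0(2) u that by blast
    ultimately show ?thesis by (simp add: mult_right_mono mult.commute[of "(norm x)^2"])
  qed
  thus ?thesis using m by blast
qed

lemma quad_upper:
  fixes H :: "real^'n::finite^'n"
  shows "\<exists>M\<ge>0. \<forall>x. \<bar>x \<bullet> (H *v x)\<bar> \<le> M * (norm x)^2"
proof -
  have "bounded_linear (\<lambda>x::real^'n. H *v x)" by (simp add: linear_conv_bounded_linear[symmetric])
  then obtain K where K: "\<And>x. norm (H *v x) \<le> norm x * K" and Kp: "K > 0"
    using bounded_linear.pos_bounded by blast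
  have "\<bar>x \<bullet> (H *v x)\<bar> \<le> K * (norm x)^2" for x
  proof -
    have "\<bar>x \<bullet> (H *v x)\<bar> \<le> norm x * norm (H *v x)" by (rule Cauchy_Schwarz_ineq2)
    also have "\<dots> \<le> norm x * (norm x * K)" using K by (simp add: mult_left_mono)
    finally show ?thesis by (simp add: power2_eq_square mult_ac)
  qed
  thus ?thesis using Kp by (intro exI[of _ K]) auto
qed

lemma pd_open:
  fixes A H :: "real^'n::finite^'n"
  assumes pdA: "pd A" and symH: "transpose H = H"
  shows "\<exists>d>0. \<forall>t. \<bar>t\<bar> < d \<longrightarrow> pd (A + t *\<^sub>R H)"
proof -
  obtain m where m: "m > 0" "\<And>x. m * (norm x)^2 \<le> x \<bullet> (A *v x)" using pd_lower[OF pdA] by blast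
  obtain M where M: "M \<ge> 0" "\<And>x. \<bar>x \<bullet> (H *v x)\<bar> \<le> M * (norm x)^2" using quad_upper[of H] by blast
  define d where "d = m / (M + 1)"
  have d: "d > 0" using m M by (simp add: d_def)
  have "pd (A + t *\<^sub>R H)" if t: "\<bar>t\<bar> < d" for t
    unfolding pos_def_mat_def
  proof safe
    show "transpose (A + t *\<^sub>R H) = A + t *\<^sub>R H"
      using pd_sym[OF pdA] symH by (simp add: transpose_add' transpose_scalar)
  next
    fix x :: "real^'n" assume x: "x \<noteq> 0"
    have n: "(norm x)^2 > 0" using x by simp
    have "\<bar>t\<bar> * (M + 1) < m" using t M(1) by (simp add: d_def field_simps)
    hence tM: "\<bar>t\<bar> * M < m" using M(1) by (smt (verit) mult_nonneg_nonneg abs_ge_zero distrib_left)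
    have e: "x \<bullet> ((A + t *\<^sub>R H) *v x) = x \<bullet> (A *v x) + t * (x \<bullet> (H *v x))"
      by (simp add: matrix_vector_mult_add_rdistrib scaleR_matrix_vector_assoc[symmetric] inner_add_right)
    have "\<bar>t * (x \<bullet> (H *v x))\<bar> \<le> \<bar>t\<bar> * (M * (norm x)^2)"
      using M(2)[of x] by (simp add: abs_mult mult_left_mono)
    moreover have "\<bar>t\<bar> * (M * (norm x)^2) < m * (norm x)^2"
      using tM n by (simp add: mult.assoc[symmetric])
    ultimately show "0 < x \<bullet> ((A + t *\<^sub>R H) *v x)" using m(2)[of x] e by linarith
  qed
  thus ?thesis using d by blast
qed



lemma det_continuous:
  fixes f :: "'a::t2_space \<Rightarrow> real^'n::finite^'n"
  assumes "\<And>i j. continuous F (\<lambda>t. f t $ i $ j)"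
  shows "continuous F (\<lambda>t. det (f t))"
  unfolding det_def by (intro continuous_intros assms)

lemma inv_entry:
  fixes M :: "real^'n::finite^'n"
  assumes inv: "invertible M"
  shows "matrix_inv M $ k $ i = det (\<chi> r c. if c = k then (if r = i then 1 else 0) else M$r$c) / det M"
proof -
  define v where "v = (\<chi> k. matrix_inv M $ k $ i)"
  have "M *v v = axis i 1"
  proof -
    have "(M *v v)$r = (M ** matrix_inv M)$r$i" for r
      by (simp add: v_def matrix_vector_mult_def matrix_matrix_mult_def)
    thus ?thesis using inv_props(1)[OF inv] by (simp add: vec_eq_iff mat_def axis_def)
  qed
  moreover have "det M \<noteq> 0" using inv invertible_det_nz by blast
  ultimately have "v = (\<chi> k. det (\<chi> r c. if c = k then (axis i 1 :: real^'n)$r else M$r$c) / det M)"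
    using cramer by blast
  hence "v $ k = det (\<chi> r c. if c = k then (axis i 1 :: real^'n)$r else M$r$c) / det M" by simp
  moreover have "(\<chi> r c. if c = k then (axis i 1 :: real^'n)$r else M$r$c) =
     (\<chi> r c. if c = k then (if r = i then 1 else 0) else M$r$c)" by (simp add: vec_eq_iff axis_def)
  ultimately show ?thesis by (simp add: v_def)
qed

lemma FO:
  fixes S H K :: "real^'n::finite^'n"
  assumes pdS: "pd S" and symH: "transpose H = H" and dpos: "d > 0"
    and opt: "\<And>t. 0 < t \<Longrightarrow> t < d \<Longrightarrow> pd (S + t *\<^sub>R H) \<Longrightarrow>
       - ln (det S) + trace (S ** K) \<le> - ln (det (S + t *\<^sub>R H)) + trace ((S + t *\<^sub>R H) ** K)"
  shows "trace (matrix_inv S ** H) \<le> trace (H ** K)"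
proof -
  obtain d' where d': "d' > 0" "\<And>t. \<bar>t\<bar> < d' \<Longrightarrow> pd (S + t *\<^sub>R H)"
    using pd_open[OF pdS symH] by blast
  define X where "X = (\<lambda>t. S + t *\<^sub>R H)"
  define N where "N = (\<lambda>t k i. (\<chi> r c. if c = k then (if r = i then 1 else 0) else X t $r$c) :: real^'n^'n)"
  define G where "G = (\<lambda>t. \<Sum>k\<in>UNIV. \<Sum>i\<in>UNIV. det (N t k i) / det (X t) * H$i$k)"
  have G_eq: "G t = trace (matrix_inv (X t) ** H)" if "invertible (X t)" for t
    unfolding G_def trace_mult_sum inv_entry[OF that] N_def by simp
  have bound: "G t \<le> trace (H ** K)" if t: "0 < t" "t < min d d'" for t
  proof -
    have pdX: "pd (X t)" using d'(2)[of t] t unfolding X_def by auto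
    have k1: "ln (det S) - ln (det (X t)) \<le> trace (matrix_inv (X t) ** S) - real CARD('n)"
      by (rule key_T(1)[OF pdX pdS])
    have invX: "invertible (X t)" by (rule pd_invertible[OF pdX])
    have "matrix_inv (X t) ** S = matrix_inv (X t) ** (X t - t *\<^sub>R H)" by (simp add: X_def)
    also have "\<dots> = mat 1 - t *\<^sub>R (matrix_inv (X t) ** H)"
      by (simp add: matrix_diff_ldistrib' inv_props[OF invX] matrix_scalar_ac scalar_matrix_assoc)
    finally have "trace (matrix_inv (X t) ** S) = real CARD('n) - t * trace (matrix_inv (X t) ** H)"
      by (simp add: trace_sub trace_I trace_scaleR')
    hence k2: "ln (det S) - ln (det (X t)) \<le> - t * G t" using k1 G_eq[OF invX] by simp
    have "trace (X t ** K) = trace (S ** K) + t * trace (H ** K)"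
      by (simp add: X_def matrix_add_rdistrib' trace_add trace_scaleR' scalar_matrix_assoc[symmetric])
    hence "- ln (det S) + trace (S ** K) \<le> - ln (det (X t)) + trace (S ** K) + t * trace (H ** K)"
      using opt[of t] t pdX unfolding X_def by simp
    hence "t * G t \<le> t * trace (H ** K)" using k2 by simp
    thus ?thesis using t by simp
  qed
  have invS: "invertible (X 0)" using pd_invertible[OF pdS] by (simp add: X_def)
  have dS: "det (X 0) \<noteq> 0" using invS invertible_det_nz by blast
  have contX: "continuous (at 0) (\<lambda>t. det (X t))"
    by (rule det_continuous) (simp add: X_def continuous_intros)
  have contN: "continuous (at 0) (\<lambda>t. det (N t k i))" for k i
  proof (rule det_continuous)
    fix r c show "continuous (at 0) (\<lambda>t. N t k i $ r $ c)"
      by (cases "c = k") (simp_all add: N_def X_def continuous_intros)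
  qed
  have contG: "continuous (at 0) G"
    unfolding G_def by (intro continuous_intros contX contN dS)
  hence "(G \<longlongrightarrow> G 0) (at 0)" by (simp add: isCont_def)
  hence lim: "(G \<longlongrightarrow> G 0) (at_right 0)" by (rule tendsto_mono[OF at_le, rotated]) simp
  have ev: "eventually (\<lambda>t. G t \<le> trace (H ** K)) (at_right 0)"
    unfolding eventually_at_right_field using bound dpos d'(1) by (intro exI[of _ "min d d'"]) auto
  have "G 0 \<le> trace (H ** K)" by (rule tendsto_upperbound[OF lim ev]) simp
  thus ?thesis using G_eq[OF invS] by (simp add: X_def)
qed



definition Um :: "'n::finite \<Rightarrow> 'n \<Rightarrow> real^'n^'n" where
  "Um i j = (\<chi> r c. if r = i \<and> c = j then 1 else 0)"

definition Hm :: "'n::finite \<Rightarrow> 'n \<Rightarrow> real^'n^'n" where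
  "Hm i j = (\<chi> r c. if (r = i \<and> c = j) \<or> (r = j \<and> c = i) then 1 else 0)"

lemma trace_Um: "trace ((A::real^'n::finite^'n) ** Um i j) = A$j$i"
proof -
  have "(\<Sum>l\<in>UNIV. A$k$l * Um i j $ l $ k) = (if k = j then A$k$i else 0)" for k
  proof (cases "k = j")
    case True
    have "(\<Sum>l\<in>UNIV. A$k$l * Um i j $ l $ k) = (\<Sum>l\<in>UNIV. if l = i then A$k$l else 0)"
      by (rule sum.cong) (auto simp: Um_def True)
    thus ?thesis using True by simp
  next
    case False
    thus ?thesis by (simp add: Um_def)
  qed
  hence "trace (A ** Um i j) = (\<Sum>k\<in>UNIV. if k = j then A$k$i else 0)"
    unfolding trace_mult_sum by simp
  thus ?thesis by simp
qed

lemma Hm_split: "Hm i j = (if i = j then Um i i else Um i j + Um j i)"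
  by (auto simp: Hm_def Um_def vec_eq_iff)

lemma trace_Hm: "trace ((A::real^'n::finite^'n) ** Hm i j) = (if i = j then A$i$i else A$j$i + A$i$j)"
  by (simp add: Hm_split matrix_add_ldistrib trace_add trace_Um)

lemma trace_Hm': "trace (Hm i j ** (A::real^'n::finite^'n)) = (if i = j then A$i$i else A$j$i + A$i$j)"
  by (metis trace_Hm trace_mul_sym)

lemma Hm_sym: "transpose (Hm i j) = Hm i j"
  by (auto simp: Hm_def transpose_def vec_eq_iff)

lemma Hm_entry: "Hm i j $ r $ c = (if (r = i \<and> c = j) \<or> (r = j \<and> c = i) then 1 else 0)"
  by (simp add: Hm_def)

lemma trace_neg1: "trace ((A::real^'n::finite^'n) ** (- B)) = - trace (A ** B)"
  by (simp add: trace_mult_sum sum_negf)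

lemma trace_neg2: "trace ((- B) ** (A::real^'n::finite^'n)) = - trace (B ** A)"
  by (simp add: trace_mult_sum sum_negf)

lemma pd_inv: "pd (A::real^'n::finite^'n) \<Longrightarrow> pd (matrix_inv A)"
proof -
  assume pdA: "pd A"
  have invA: "invertible A" by (rule pd_invertible[OF pdA])
  show "pd (matrix_inv A)" unfolding pos_def_mat_def
  proof safe
    show "transpose (matrix_inv A) = matrix_inv A" by (rule inv_sym[OF invA pd_sym[OF pdA]])
  next
    fix x :: "real^'n" assume x: "x \<noteq> 0"
    define y where "y = matrix_inv A *v x"
    have Ay: "A *v y = x" by (simp add: y_def matrix_vector_mul_assoc inv_props[OF invA])
    hence "y \<noteq> 0" using x by auto
    hence "0 < y \<bullet> (A *v y)" using pdA unfolding pos_def_mat_def by blast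
    also have "y \<bullet> (A *v y) = x \<bullet> (matrix_inv A *v x)"
      using Ay by (simp add: y_def inner_commute)
    finally show "0 < x \<bullet> (matrix_inv A *v x)" .
  qed
qed



lemma Hm_neg_sym: "transpose (- Hm i j) = - Hm i j"
  using Hm_sym[of i j] by (auto simp: transpose_def vec_eq_iff)

theorem theorem5p1:
  fixes E :: "'n::finite \<Rightarrow> 'n \<Rightarrow> bool"
    and n :: nat and X :: "nat \<Rightarrow> real^'n"
    and S Khat Scheck :: "real^'n^'n"
  assumes E_sym: "\<forall>i j. E i j = E j i"
    and E_irrefl: "\<forall>i. \<not> E i i"
    and n_pos: "0 < n"
    and S_def: "S = sample_cov n X"
    and mle: "ggm_mle E S Khat"
    and mde_exists: "mde E Khat Scheck"
  shows "mde_system E S (matrix_inv Khat) Scheck \<and>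
         (\<forall>Sh Sc. pos_def_mat Sh \<and> pos_def_mat Sc \<and> mde_system E S Sh Sc
            \<longrightarrow> Sh = matrix_inv Khat \<and> Sc = Scheck)"
proof -
  have Ssym: "\<And>i j. S$i$j = S$j$i"
    by (simp add: S_def sample_cov_def sum_component mult.commute)
  have pdK: "pd Khat" and patK: "\<And>i j. i \<noteq> j \<Longrightarrow> \<not> E i j \<Longrightarrow> Khat $ i $ j = 0"
    and optK: "\<And>K'. pd K' \<Longrightarrow> (\<forall>i j. i \<noteq> j \<and> \<not> E i j \<longrightarrow> K' $ i $ j = 0) \<Longrightarrow>
        ln (det K') - trace (S ** K') \<le> ln (det Khat) - trace (S ** Khat)"
    using mle unfolding ggm_mle_def by auto
  have pdC: "pd Scheck" and nnC: "\<And>i j. E i j \<Longrightarrow> 0 \<le> Scheck $ i $ j"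
    and optC: "\<And>Sig'. pd Sig' \<Longrightarrow> (\<forall>i j. E i j \<longrightarrow> 0 \<le> Sig' $ i $ j) \<Longrightarrow>
        - ln (det Scheck) + trace (Scheck ** Khat) \<le> - ln (det Sig') + trace (Sig' ** Khat)"
    using mde_exists unfolding mde_def by auto
  define Sh where "Sh = matrix_inv Khat"
  have invK: "invertible Khat" by (rule pd_invertible[OF pdK])
  have pdSh: "pd Sh" unfolding Sh_def by (rule pd_inv[OF pdK])
  have iSh: "matrix_inv Sh = Khat" unfolding Sh_def by (rule inv_inv[OF invK])
  define Ck where "Ck = matrix_inv Scheck"
  have pdCk: "pd Ck" unfolding Ck_def by (rule pd_inv[OF pdC])

  have fo_mle: "trace (Sh ** H) = trace (H ** S)"
    if symH: "transpose H = H" and patH: "\<And>i j. i \<noteq> j \<Longrightarrow> \<not> E i j \<Longrightarrow> H $ i $ j = 0" for H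
  proof -
    have one: "trace (Sh ** H') \<le> trace (H' ** S)"
      if symH': "transpose H' = H'" and patH': "\<And>i j. i \<noteq> j \<Longrightarrow> \<not> E i j \<Longrightarrow> H' $ i $ j = 0" for H'
      unfolding Sh_def
    proof (rule FO[OF pdK symH' zero_less_one])
      fix t :: real assume t: "0 < t" "t < 1" "pd (Khat + t *\<^sub>R H')"
      have "\<forall>i j. i \<noteq> j \<and> \<not> E i j \<longrightarrow> (Khat + t *\<^sub>R H') $ i $ j = 0"
        using patK patH' by simp
      from optK[OF t(3) this]
      show "- ln (det Khat) + trace (Khat ** S) \<le> - ln (det (Khat + t *\<^sub>R H')) + trace ((Khat + t *\<^sub>R H') ** S)"
        by (simp add: trace_mul_sym[of S])
    qed
    have a: "trace (Sh ** H) \<le> trace (H ** S)" by (rule one[OF symH patH])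
    have "trace (Sh ** (- H)) \<le> trace ((- H) ** S)"
      by (rule one) (use symH patH in \<open>auto simp: transpose_def vec_eq_iff\<close>)
    hence b: "trace (H ** S) \<le> trace (Sh ** H)" by (simp add: trace_neg1 trace_neg2)
    show ?thesis using a b by simp
  qed

  have fo_mde: "trace (Ck ** H) \<le> trace (H ** Khat)"
    if symH: "transpose H = H" and d: "d > 0"
      and feas: "\<And>t i j. 0 < t \<Longrightarrow> t < d \<Longrightarrow> E i j \<Longrightarrow> 0 \<le> (Scheck + t *\<^sub>R H) $ i $ j" for H d
    unfolding Ck_def
  proof (rule FO[OF pdC symH d])
    fix t :: real assume t: "0 < t" "t < d" "pd (Scheck + t *\<^sub>R H)"
    show "- ln (det Scheck) + trace (Scheck ** Khat) \<le> - ln (det (Scheck + t *\<^sub>R H)) + trace ((Scheck + t *\<^sub>R H) ** Khat)"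
      by (rule optC[OF t(3)]) (use feas t in auto)
  qed

  have symSh: "\<And>i j. Sh$i$j = Sh$j$i" using pd_entry_sym[OF pdSh] .
  have symK: "\<And>i j. Khat$i$j = Khat$j$i" using pd_entry_sym[OF pdK] .
  have symCk: "\<And>i j. Ck$i$j = Ck$j$i" using pd_entry_sym[OF pdCk] .
  have symC: "\<And>i j. Scheck$i$j = Scheck$j$i" using pd_entry_sym[OF pdC] .

  have Hm_pat: "Hm i j $ r $ c = 0" if "\<not> ((r = i \<and> c = j) \<or> (r = j \<and> c = i))" for i j r c
    using that by (simp add: Hm_entry)

  have sh_S: "Sh$i$j = S$i$j" if "i = j \<or> E i j" for i j
  proof -
    have "trace (Sh ** Hm i j) = trace (Hm i j ** S)"
    proof (rule fo_mle[OF Hm_sym])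
      fix r c assume "r \<noteq> c" "\<not> E r c"
      thus "Hm i j $ r $ c = 0" using that E_sym by (intro Hm_pat) auto
    qed
    thus ?thesis unfolding trace_Hm trace_Hm' using symSh Ssym
      by (cases "i = j") (auto simp: symSh[of j i] Ssym[of j i])
  qed

  have ck_off: "Ck$i$j = Khat$i$j" if ij: "i \<noteq> j" "\<not> E i j" for i j
  proof -
    have feas: "0 \<le> (Scheck + t *\<^sub>R G) $ r $ c" if "G = Hm i j \<or> G = - Hm i j" "E r c" for t r c G
    proof -
      have "Hm i j $ r $ c = 0" using \<open>E r c\<close> ij E_sym by (intro Hm_pat) auto
      thus ?thesis using that nnC[of r c] by auto
    qed
    have a: "trace (Ck ** Hm i j) \<le> trace (Hm i j ** Khat)"
      by (rule fo_mde[OF Hm_sym zero_less_one], rule feas[of "Hm i j"]) simp_all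
    have "trace (Ck ** (- Hm i j)) \<le> trace ((- Hm i j) ** Khat)"
      by (rule fo_mde[OF Hm_neg_sym zero_less_one], rule feas[of "- Hm i j"]) simp_all
    hence b: "trace (Hm i j ** Khat) \<le> trace (Ck ** Hm i j)" by (simp add: trace_neg1 trace_neg2)
    have "trace (Ck ** Hm i j) = trace (Hm i j ** Khat)" using a b by simp
    thus ?thesis unfolding trace_Hm trace_Hm' using ij by (simp add: symCk[of j i] symK[of j i])
  qed

  have ck_diag: "Ck$i$i = Khat$i$i" for i
  proof -
    have feas: "0 \<le> (Scheck + t *\<^sub>R G) $ r $ c" if "G = Hm i i \<or> G = - Hm i i" "E r c" for t r c G
    proof -
      have "r \<noteq> c" using \<open>E r c\<close> E_irrefl by auto
      hence "Hm i i $ r $ c = 0" by (intro Hm_pat) auto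
      thus ?thesis using that nnC[of r c] by auto
    qed
    have a: "trace (Ck ** Hm i i) \<le> trace (Hm i i ** Khat)"
      by (rule fo_mde[OF Hm_sym zero_less_one], rule feas[of "Hm i i"]) simp_all
    have "trace (Ck ** (- Hm i i)) \<le> trace ((- Hm i i) ** Khat)"
      by (rule fo_mde[OF Hm_neg_sym zero_less_one], rule feas[of "- Hm i i"]) simp_all
    hence b: "trace (Hm i i ** Khat) \<le> trace (Ck ** Hm i i)" by (simp add: trace_neg1 trace_neg2)
    have "trace (Ck ** Hm i i) = trace (Hm i i ** Khat)" using a b by simp
    thus ?thesis unfolding trace_Hm trace_Hm' by simp
  qed

  have ck_edge: "Ck$i$j \<le> Khat$i$j" if e: "E i j" for i j
  proof -
    have ij: "i \<noteq> j" using e E_irrefl by auto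
    have "trace (Ck ** Hm i j) \<le> trace (Hm i j ** Khat)"
    proof (rule fo_mde[OF Hm_sym zero_less_one])
      fix t :: real and r c assume "0 < t" "E r c"
      thus "0 \<le> (Scheck + t *\<^sub>R Hm i j) $ r $ c" using nnC[of r c] by (simp add: Hm_entry)
    qed
    thus ?thesis unfolding trace_Hm trace_Hm' using ij by (simp add: symCk[of j i] symK[of j i])
  qed
  have ck_slack: "Scheck$i$j * (Khat$i$j - Ck$i$j) = 0" if e: "E i j" for i j
  proof (cases "Scheck$i$j = 0")
    case True thus ?thesis by simp
  next
    case False
    hence pos: "Scheck$i$j > 0" using nnC[OF e] by simp
    have ij: "i \<noteq> j" using e E_irrefl by auto
    have "trace (Ck ** (- Hm i j)) \<le> trace ((- Hm i j) ** Khat)"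
    proof (rule fo_mde[OF _ pos])
      show "transpose (- Hm i j) = - Hm i j" by (rule Hm_neg_sym)
    next
      fix t :: real and r c assume t: "0 < t" "t < Scheck$i$j" and rc: "E r c"
      show "0 \<le> (Scheck + t *\<^sub>R (- Hm i j)) $ r $ c"
      proof (cases "(r = i \<and> c = j) \<or> (r = j \<and> c = i)")
        case True
        hence "Scheck$r$c = Scheck$i$j" using symC by auto
        thus ?thesis using True t by (auto simp: Hm_entry)
      next
        case False
        hence "Hm i j $ r $ c = 0" by (simp add: Hm_entry)
        thus ?thesis using nnC[OF rc] by simp
      qed
    qed
    hence "trace (Hm i j ** Khat) \<le> trace (Ck ** Hm i j)" by (simp add: trace_neg1 trace_neg2)
    hence "Khat$i$j \<le> Ck$i$j" unfolding trace_Hm trace_Hm' using ij by (simp add: symCk[of j i] symK[of j i])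
    thus ?thesis using ck_edge[OF e] by simp
  qed

  have part1: "mde_system E S Sh Scheck"
    unfolding mde_system_def iSh Ck_def[symmetric]
    using nnC sh_S patK ck_off ck_diag ck_edge ck_slack by auto

  have part2: "Sh' = Sh \<and> Sc = Scheck" if asm: "pd Sh'" "pd Sc" "mde_system E S Sh' Sc" for Sh' Sc
  proof -
    have s1: "\<And>i j. E i j \<Longrightarrow> 0 \<le> Sc $ i $ j"
      and s2: "\<And>i j. E i j \<Longrightarrow> Sh' $ i $ j = S $ i $ j"
      and s3: "\<And>i. Sh' $ i $ i = S $ i $ i"
      and s4: "\<And>i j. i \<noteq> j \<Longrightarrow> \<not> E i j \<Longrightarrow> matrix_inv Sc $ i $ j = 0 \<and> matrix_inv Sh' $ i $ j = 0"
      and s5: "\<And>i j. E i j \<Longrightarrow> matrix_inv Sc $ i $ j \<le> matrix_inv Sh' $ i $ j"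
      and s6: "\<And>i. matrix_inv Sc $ i $ i = matrix_inv Sh' $ i $ i"
      and s7: "\<And>i j. E i j \<Longrightarrow> Sc $ i $ j * (matrix_inv Sh' $ i $ j - matrix_inv Sc $ i $ j) = 0"
      using asm(3) unfolding mde_system_def by auto
    define P where "P = matrix_inv Sh'"
    have invSh': "invertible Sh'" by (rule pd_invertible[OF asm(1)])
    have pdP: "pd P" unfolding P_def by (rule pd_inv[OF asm(1)])
    have iP: "matrix_inv P = Sh'" unfolding P_def by (rule inv_inv[OF invSh'])
    have patP: "\<forall>i j. i \<noteq> j \<and> \<not> E i j \<longrightarrow> P $ i $ j = 0" using s4 unfolding P_def by auto
    have trS: "trace (S ** K') = trace (Sh' ** K')" if patK': "\<forall>i j. i \<noteq> j \<and> \<not> E i j \<longrightarrow> K' $ i $ j = 0" for K'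
      unfolding trace_mult_sum
    proof (intro sum.cong refl)
      fix k i
      show "S$k$i * K'$i$k = Sh'$k$i * K'$i$k"
      proof (cases "k = i \<or> E k i")
        case True thus ?thesis using s2 s3 by auto
      next
        case False
        hence "K'$i$k = 0" using patK' E_sym by auto
        thus ?thesis by simp
      qed
    qed
    have o1: "ln (det P) - trace (Sh' ** P) \<le> ln (det Khat) - trace (Sh' ** Khat)"
      using optK[OF pdP patP] trS[OF patP] trS[of Khat] patK by auto
    have trP: "trace (Sh' ** P) = real CARD('n)"
      unfolding P_def by (simp add: inv_props[OF invSh'] trace_I)
    have k1: "ln (det Khat) - ln (det P) \<le> trace (Sh' ** Khat) - real CARD('n)"
      using key_T(1)[OF pdP pdK] iP by simp
    have "ln (det Khat) - ln (det P) = trace (matrix_inv P ** Khat) - real CARD('n)"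
      using o1 trP k1 iP by simp
    hence KP: "Khat = P" by (rule key_T(2)[OF pdP pdK])
    have ShSh: "Sh' = Sh" unfolding Sh_def KP P_def by (rule inv_inv[OF invSh', symmetric])
    have iSh': "matrix_inv Sh' = Khat" using ShSh iSh by simp
    define Cc where "Cc = matrix_inv Sc"
    have invSc: "invertible Sc" by (rule pd_invertible[OF asm(2)])
    define D where "D = Khat - Cc"
    have Dz: "D$i$j = 0" if "\<not> E i j" for i j
    proof (cases "i = j")
      case True thus ?thesis using s6 iSh' by (simp add: D_def Cc_def)
    next
      case False thus ?thesis using s4[OF False that] iSh' by (simp add: D_def Cc_def)
    qed
    have Dnn: "D$i$j \<ge> 0" if "E i j" for i j using s5[OF that] iSh' by (simp add: D_def Cc_def)
    have Dsl: "Sc$i$j * D$i$j = 0" if "E i j" for i j using s7[OF that] iSh' by (simp add: D_def Cc_def)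
    have symSc: "\<And>i j. Sc$i$j = Sc$j$i" using pd_entry_sym[OF asm(2)] .
    have tr1: "trace (Scheck ** D) \<ge> 0"
      unfolding trace_mult_sum
    proof (intro sum_nonneg)
      fix k i
      show "0 \<le> Scheck$k$i * D$i$k"
      proof (cases "E i k")
        case True thus ?thesis using Dnn[OF True] nnC[of k i] E_sym by auto
      next
        case False thus ?thesis using Dz[OF False] by simp
      qed
    qed
    have tr2: "trace (Sc ** D) = 0"
      unfolding trace_mult_sum
    proof (intro sum.neutral ballI)
      fix k i
      show "Sc$k$i * D$i$k = 0"
      proof (cases "E i k")
        case True thus ?thesis using Dsl[OF True] symSc[of k i] by simp
      next
        case False thus ?thesis using Dz[OF False] by simp
      qed
    qed
    have KD: "Khat = D + Cc" by (simp add: D_def)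
    have trA: "trace (Scheck ** Khat) = trace (Scheck ** D) + trace (Cc ** Scheck)"
      unfolding KD by (simp add: matrix_add_ldistrib trace_add trace_mul_sym[of Scheck Cc])
    have trB: "trace (Sc ** Khat) = real CARD('n)"
    proof -
      have "trace (Sc ** Khat) = trace (Sc ** D) + trace (Sc ** Cc)"
        unfolding KD by (simp add: matrix_add_ldistrib trace_add)
      thus ?thesis using tr2 by (simp add: Cc_def inv_props[OF invSc] trace_I)
    qed
    have o2: "- ln (det Scheck) + trace (Scheck ** Khat) \<le> - ln (det Sc) + trace (Sc ** Khat)"
      by (rule optC[OF asm(2)]) (use s1 in auto)
    have k2: "ln (det Scheck) - ln (det Sc) \<le> trace (Cc ** Scheck) - real CARD('n)"
      unfolding Cc_def by (rule key_T(1)[OF asm(2) pdC])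
    have "ln (det Scheck) - ln (det Sc) = trace (matrix_inv Sc ** Scheck) - real CARD('n)"
      using o2 k2 trA trB tr1 unfolding Cc_def by simp
    hence "Scheck = Sc" by (rule key_T(2)[OF asm(2) pdC])
    thus ?thesis using ShSh by simp
  qed
  show ?thesis using part1 part2 unfolding Sh_def by blast
qed


end
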